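(* Let $g>0$ and $\chi>0$ be constants, and let $h(t,x)>0$, $u(t,x)$ be smooth solutions of $$h_t+(hu)_x=0,\qquad (hu)_t+\Big(hu^2+g\frac{h^2}{2}-\chi\ddot\tau\Big)_x=0,$$ where $\tau=1/h$ and for any function $f(t,x)$, $\dot f=f_t+uf_x$ (so $\ddot\tau$ is the second such material derivative of $\tau$). Then, with $q=hu$, the energy conservation law $$\left(h\Big(\frac{u^2}{2}+g\frac{h}{2}+\frac{\chi\dot\tau^2}{2}\Big)\right)_t+\left(q\Big(\frac{u^2}{2}+g\frac{h}{2}+\frac{\chi\dot\tau^2}{2}\Big)+\Big(g\frac{h^2}{2}-\chi\ddot\tau\Big)u\right)_x=0$$ holds.
   Context: This is the "simplified geometrical Green–Naghdi" system for section-averaged depth $h$ and Favre-averaged velocity $u$ in a prismatic channel, with $\chi$ a positive geometric dispersion coefficient determined by the channel cross-section. *)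

theory Defs
  imports "HOL-Analysis.Analysis"
begin

definition pt :: "(real \<Rightarrow> real \<Rightarrow> real) \<Rightarrow> real \<Rightarrow> real \<Rightarrow> real" where
  "pt f = (\<lambda>t x. deriv (\<lambda>s. f s x) t)"

definition px :: "(real \<Rightarrow> real \<Rightarrow> real) \<Rightarrow> real \<Rightarrow> real \<Rightarrow> real" where
  "px f = (\<lambda>t x. deriv (\<lambda>y. f t y) x)"

definition matd :: "(real \<Rightarrow> real \<Rightarrow> real) \<Rightarrow> (real \<Rightarrow> real \<Rightarrow> real) \<Rightarrow> real \<Rightarrow> real \<Rightarrow> real" where
  "matd u f = (\<lambda>t x. pt f t x + u t x * px f t x)"

fun iterp :: "bool list \<Rightarrow> (real \<Rightarrow> real \<Rightarrow> real) \<Rightarrow> real \<Rightarrow> real \<Rightarrow> real" where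
  "iterp [] f = f"
| "iterp (b # bs) f = (if b then pt else px) (iterp bs f)"

definition smooth_on :: "(real \<times> real) set \<Rightarrow> (real \<Rightarrow> real \<Rightarrow> real) \<Rightarrow> bool" where
  "smooth_on U f \<longleftrightarrow> (\<forall>ds. \<forall>p\<in>U. (\<lambda>q. iterp ds f (fst q) (snd q)) differentiable (at p))"

end

theory Submission
  imports Defs
begin

definition D :: "(real \<Rightarrow> real \<Rightarrow> real) \<Rightarrow> real \<times> real \<Rightarrow> bool" where
  "D F p \<longleftrightarrow> (\<lambda>q. F (fst q) (snd q)) differentiable (at p)"

definition eqU :: "(real \<times> real) set \<Rightarrow> (real \<Rightarrow> real \<Rightarrow> real) \<Rightarrow> (real \<Rightarrow> real \<Rightarrow> real) \<Rightarrow> bool" where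
  "eqU U F G \<longleftrightarrow> (\<forall>t x. (t,x) \<in> U \<longrightarrow> F t x = G t x)"

definition smn :: "(real \<times> real) set \<Rightarrow> nat \<Rightarrow> (real \<Rightarrow> real \<Rightarrow> real) \<Rightarrow> bool" where
  "smn U n F \<longleftrightarrow> (\<forall>ds. length ds \<le> n \<longrightarrow> (\<forall>p\<in>U. D (iterp ds F) p))"

definition opb :: "bool \<Rightarrow> (real \<Rightarrow> real \<Rightarrow> real) \<Rightarrow> real \<Rightarrow> real \<Rightarrow> real" where
  "opb b = (if b then pt else px)"

lemma D_t: assumes "D F (t,x)" shows "((\<lambda>s. F s x) has_real_derivative pt F t x) (at t)"
proof -
  have "(\<lambda>s. (s, x)) differentiable (at t)" by (intro derivative_intros)
  then have "((\<lambda>q. F (fst q) (snd q)) \<circ> (\<lambda>s. (s, x))) differentiable (at t)"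
    using assms unfolding D_def by (intro differentiable_chain_at) auto
  then have "(\<lambda>s. F s x) differentiable (at t)" by (simp add: o_def)
  then show ?thesis unfolding pt_def by (simp add: DERIV_deriv_iff_real_differentiable)
qed

lemma D_x: assumes "D F (t,x)" shows "((\<lambda>y. F t y) has_real_derivative px F t x) (at x)"
proof -
  have "(\<lambda>y. (t, y)) differentiable (at x)" by (intro derivative_intros)
  then have "((\<lambda>q. F (fst q) (snd q)) \<circ> (\<lambda>y. (t, y))) differentiable (at x)"
    using assms unfolding D_def by (intro differentiable_chain_at) auto
  then have "(\<lambda>y. F t y) differentiable (at x)" by (simp add: o_def)
  then show ?thesis unfolding px_def by (simp add: DERIV_deriv_iff_real_differentiable)
qed

lemma evU_t: fixes t x :: real and U :: "(real*real) set" assumes "open U" "(t,x) \<in> U" shows "eventually (\<lambda>s. (s,x) \<in> U) (nhds t)"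
proof -
  obtain e where e: "e > 0" "ball (t,x) e \<subseteq> U" using assms open_contains_ball by blast
  show ?thesis unfolding eventually_nhds_metric
    using e by (intro exI[of _ e]) (auto simp: dist_Pair_Pair dist_commute)
qed

lemma evU_x: fixes t x :: real and U :: "(real*real) set" assumes "open U" "(t,x) \<in> U" shows "eventually (\<lambda>y. (t,y) \<in> U) (nhds x)"
proof -
  obtain e where e: "e > 0" "ball (t,x) e \<subseteq> U" using assms open_contains_ball by blast
  show ?thesis unfolding eventually_nhds_metric
    using e by (intro exI[of _ e]) (auto simp: dist_Pair_Pair dist_commute)
qed

lemma eqU_pt: assumes "open U" "eqU U F G" shows "eqU U (pt F) (pt G)"
  unfolding eqU_def pt_def
proof (intro allI impI)
  fix t x assume "(t,x) \<in> U"
  from evU_t[OF assms(1) this] assms(2) have "eventually (\<lambda>s. F s x = G s x) (nhds t)"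
    unfolding eqU_def by (auto elim: eventually_mono)
  then show "deriv (\<lambda>s. F s x) t = deriv (\<lambda>s. G s x) t" by (rule deriv_cong_ev) simp
qed

lemma eqU_px: assumes "open U" "eqU U F G" shows "eqU U (px F) (px G)"
  unfolding eqU_def px_def
proof (intro allI impI)
  fix t x assume "(t,x) \<in> U"
  from evU_x[OF assms(1) this] assms(2) have "eventually (\<lambda>y. F t y = G t y) (nhds x)"
    unfolding eqU_def by (auto elim: eventually_mono)
  then show "deriv (\<lambda>y. F t y) x = deriv (\<lambda>y. G t y) x" by (rule deriv_cong_ev) simp
qed

lemma eqU_op: "open U \<Longrightarrow> eqU U F G \<Longrightarrow> eqU U (opb b F) (opb b G)"
  unfolding opb_def using eqU_pt eqU_px by auto

lemma iterp_op: "iterp ds F = iterp ds F" ..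

lemma iterp_Cons: "iterp (b # ds) F = opb b (iterp ds F)"
  by (simp add: opb_def)

declare iterp.simps(2)[simp del]

lemma eqU_iter: "open U \<Longrightarrow> eqU U F G \<Longrightarrow> eqU U (iterp ds F) (iterp ds G)"
  by (induction ds) (auto simp: iterp_Cons eqU_op)

lemma iterp_snoc: "iterp (ds @ [b]) F = iterp ds (opb b F)"
  by (induction ds) (auto simp: iterp_Cons)

lemma eqU_trans: "eqU U F G \<Longrightarrow> eqU U G H \<Longrightarrow> eqU U F H"
  unfolding eqU_def by auto

lemma D_transfer: assumes "open U" "eqU U F G" "p \<in> U" "D F p" shows "D G p"
proof -
  from assms(4) obtain f' where f': "((\<lambda>q. F (fst q) (snd q)) has_derivative f') (at p)"
    unfolding D_def differentiable_def by blast
  have "((\<lambda>q. G (fst q) (snd q)) has_derivative f') (at p)"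
  proof (rule has_derivative_transform_within_open[OF f' assms(1) assms(3)])
    fix q assume "q \<in> U"
    then have "(fst q, snd q) \<in> U" by simp
    then show "F (fst q) (snd q) = G (fst q) (snd q)" using assms(2) unfolding eqU_def by blast
  qed
  then show ?thesis unfolding D_def differentiable_def by blast
qed

lemma pt_eq: "((\<lambda>s. F s x) has_real_derivative v) (at t) \<Longrightarrow> pt F t x = v"
  unfolding pt_def by (rule DERIV_imp_deriv)

lemma px_eq: "((\<lambda>y. F t y) has_real_derivative v) (at x) \<Longrightarrow> px F t x = v"
  unfolding px_def by (rule DERIV_imp_deriv)

lemma op_add: assumes "D F (t,x)" "D G (t,x)"
  shows "opb b (\<lambda>t x. F t x + G t x) t x = opb b F t x + opb b G t x"
proof (cases b)
  case True
  have "pt (\<lambda>t x. F t x + G t x) t x = pt F t x + pt G t x"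
    by (rule pt_eq) (rule DERIV_add[OF D_t[OF assms(1)] D_t[OF assms(2)]])
  then show ?thesis using True unfolding opb_def by simp
next
  case False
  have "px (\<lambda>t x. F t x + G t x) t x = px F t x + px G t x"
    by (rule px_eq) (rule DERIV_add[OF D_x[OF assms(1)] D_x[OF assms(2)]])
  then show ?thesis using False unfolding opb_def by simp
qed

lemma op_mult: assumes "D F (t,x)" "D G (t,x)"
  shows "opb b (\<lambda>t x. F t x * G t x) t x = opb b F t x * G t x + F t x * opb b G t x"
proof (cases b)
  case True
  have "pt (\<lambda>t x. F t x * G t x) t x = pt F t x * G t x + F t x * pt G t x"
    by (rule pt_eq) (rule DERIV_cong[OF DERIV_mult[OF D_t[OF assms(1)] D_t[OF assms(2)]]], simp add: mult.commute)
  then show ?thesis using True unfolding opb_def by simp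
next
  case False
  have "px (\<lambda>t x. F t x * G t x) t x = px F t x * G t x + F t x * px G t x"
    by (rule px_eq) (rule DERIV_cong[OF DERIV_mult[OF D_x[OF assms(1)] D_x[OF assms(2)]]], simp add: mult.commute)
  then show ?thesis using False unfolding opb_def by simp
qed

lemma op_inv: assumes "D F (t,x)" "F t x \<noteq> 0"
  shows "opb b (\<lambda>t x. 1 / F t x) t x = -1 * (opb b F t x * (1 / F t x * (1 / F t x)))"
proof (cases b)
  case True
  have "pt (\<lambda>t x. 1 / F t x) t x = -1 * (pt F t x * (1 / F t x * (1 / F t x)))"
    by (rule pt_eq) (rule DERIV_cong[OF DERIV_divide[OF DERIV_const D_t[OF assms(1)] assms(2)]], simp add: field_simps)
  then show ?thesis using True unfolding opb_def by simp
next
  case False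
  have "px (\<lambda>t x. 1 / F t x) t x = -1 * (px F t x * (1 / F t x * (1 / F t x)))"
    by (rule px_eq) (rule DERIV_cong[OF DERIV_divide[OF DERIV_const D_x[OF assms(1)] assms(2)]], simp add: field_simps)
  then show ?thesis using False unfolding opb_def by simp
qed

lemma D_add: "D F p \<Longrightarrow> D G p \<Longrightarrow> D (\<lambda>t x. F t x + G t x) p"
  unfolding D_def by (rule differentiable_add)

lemma D_mult: "D F p \<Longrightarrow> D G p \<Longrightarrow> D (\<lambda>t x. F t x * G t x) p"
  unfolding D_def by (rule differentiable_mult)

lemma smn_mono: "smn U (Suc n) F \<Longrightarrow> smn U n F"
  unfolding smn_def by auto

lemma smn_op: "smn U (Suc n) F \<Longrightarrow> smn U n (opb b F)"
  unfolding smn_def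
proof (intro allI impI ballI)
  fix ds :: "bool list" and p assume "\<forall>ds. length ds \<le> Suc n \<longrightarrow> (\<forall>p\<in>U. D (iterp ds F) p)" "length ds \<le> n" "p \<in> U"
  then have "D (iterp (ds @ [b]) F) p" by simp
  then show "D (iterp ds (opb b F)) p" by (simp add: iterp_snoc)
qed

lemma smn_D: "smn U n F \<Longrightarrow> p \<in> U \<Longrightarrow> D F p"
  unfolding smn_def by (drule spec[of _ "[]"]) simp

lemma smn_eqU: assumes "open U" "eqU U F G" "smn U n F" shows "smn U n G"
  unfolding smn_def
proof (intro allI impI ballI)
  fix ds :: "bool list" and p assume "length ds \<le> n" "p \<in> U"
  then have "D (iterp ds F) p" using assms(3) unfolding smn_def by blast
  then show "D (iterp ds G) p" using D_transfer[OF assms(1) eqU_iter[OF assms(1,2)] \<open>p \<in> U\<close>] by blast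
qed

lemma eqU_sym: "eqU U F G \<Longrightarrow> eqU U G F"
  unfolding eqU_def by auto

lemma add_iter: assumes "open U"
  shows "(\<forall>ds'. length ds' < length ds \<longrightarrow> (\<forall>p\<in>U. D (iterp ds' F) p \<and> D (iterp ds' G) p)) \<Longrightarrow>
    eqU U (iterp ds (\<lambda>t x. F t x + G t x)) (\<lambda>t x. iterp ds F t x + iterp ds G t x)"
proof (induction ds)
  case Nil
  then show ?case by (simp add: eqU_def)
next
  case (Cons b ds)
  have IH: "eqU U (iterp ds (\<lambda>t x. F t x + G t x)) (\<lambda>t x. iterp ds F t x + iterp ds G t x)"
    using Cons by auto
  have "eqU U (opb b (iterp ds (\<lambda>t x. F t x + G t x))) (opb b (\<lambda>t x. iterp ds F t x + iterp ds G t x))"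
    by (rule eqU_op[OF assms IH])
  moreover have "eqU U (opb b (\<lambda>t x. iterp ds F t x + iterp ds G t x)) (\<lambda>t x. opb b (iterp ds F) t x + opb b (iterp ds G) t x)"
    unfolding eqU_def
  proof (intro allI impI)
    fix t x assume "(t,x) \<in> U"
    then have "D (iterp ds F) (t,x)" "D (iterp ds G) (t,x)" using Cons.prems by auto
    then show "opb b (\<lambda>t x. iterp ds F t x + iterp ds G t x) t x = opb b (iterp ds F) t x + opb b (iterp ds G) t x"
      by (rule op_add)
  qed
  ultimately show ?case by (simp add: iterp_Cons eqU_trans)
qed

lemma smn_add: assumes "open U" "smn U n F" "smn U n G" shows "smn U n (\<lambda>t x. F t x + G t x)"
  unfolding smn_def
proof (intro allI impI ballI)
  fix ds :: "bool list" and p assume ds: "length ds \<le> n" and p: "p \<in> U"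
  have e: "eqU U (\<lambda>t x. iterp ds F t x + iterp ds G t x) (iterp ds (\<lambda>t x. F t x + G t x))"
    by (rule eqU_sym, rule add_iter[OF assms(1)]) (use assms ds in \<open>auto simp: smn_def\<close>)
  have "D (\<lambda>t x. iterp ds F t x + iterp ds G t x) p"
    using assms ds p by (intro D_add) (auto simp: smn_def)
  then show "D (iterp ds (\<lambda>t x. F t x + G t x)) p" by (rule D_transfer[OF assms(1) e p])
qed

lemma iter_const: "iterp ds (\<lambda>t x. c) = (\<lambda>t x. if ds = [] then c else 0)"
proof (induction ds)
  case Nil then show ?case by simp
next
  case (Cons b ds)
  have "opb b (\<lambda>t x. k) = (\<lambda>t x. 0)" for k :: real
    by (simp add: opb_def pt_def px_def)
  then show ?case using Cons by (simp add: iterp_Cons)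
qed

lemma smn_const: "smn U n (\<lambda>t x. c)"
  unfolding smn_def D_def iter_const by simp

lemma smn_mult: assumes "open U" shows "smn U n F \<Longrightarrow> smn U n G \<Longrightarrow> smn U n (\<lambda>t x. F t x * G t x)"
proof (induction n arbitrary: F G)
  case 0
  then show ?case unfolding smn_def using D_mult by simp
next
  case (Suc n)
  show ?case unfolding smn_def
  proof (intro allI impI ballI)
    fix ds :: "bool list" and p assume ds: "length ds \<le> Suc n" and p: "p \<in> U"
    show "D (iterp ds (\<lambda>t x. F t x * G t x)) p"
    proof (cases ds rule: rev_cases)
      case Nil
      then show ?thesis using Suc.prems p by (auto intro: D_mult smn_D)
    next
      case (snoc ds' b)
      have l: "length ds' \<le> n" using ds snoc by simp
      let ?H1 = "\<lambda>t x. opb b F t x * G t x" and ?H2 = "\<lambda>t x. F t x * opb b G t x"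
      have s1: "smn U n ?H1" by (rule Suc.IH[OF smn_op[OF Suc.prems(1)] smn_mono[OF Suc.prems(2)]])
      have s2: "smn U n ?H2" by (rule Suc.IH[OF smn_mono[OF Suc.prems(1)] smn_op[OF Suc.prems(2)]])
      have s3: "smn U n (\<lambda>t x. ?H1 t x + ?H2 t x)" by (rule smn_add[OF assms s1 s2])
      have e: "eqU U (\<lambda>t x. ?H1 t x + ?H2 t x) (opb b (\<lambda>t x. F t x * G t x))"
        unfolding eqU_def
      proof (intro allI impI)
        fix t x assume "(t,x) \<in> U"
        then show "opb b F t x * G t x + F t x * opb b G t x = opb b (\<lambda>t x. F t x * G t x) t x"
          using op_mult[OF smn_D[OF Suc.prems(1) \<open>(t,x) \<in> U\<close>] smn_D[OF Suc.prems(2) \<open>(t,x) \<in> U\<close>]] by simp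
      qed
      have "smn U n (opb b (\<lambda>t x. F t x * G t x))" by (rule smn_eqU[OF assms e s3])
      then show ?thesis using l p snoc by (simp add: iterp_snoc smn_def)
    qed
  qed
qed

lemma inv_base: assumes "\<And>t x. (t,x) \<in> U \<Longrightarrow> F t x \<noteq> 0" "\<And>n. smn U n F" "p \<in> U"
  shows "D (\<lambda>t x. 1 / F t x) p"
proof -
  have "D F p" using smn_D[OF assms(2) assms(3)] .
  moreover have "F (fst p) (snd p) \<noteq> 0" using assms(1)[of "fst p" "snd p"] assms(3) by simp
  ultimately show ?thesis unfolding D_def by (intro differentiable_divide) auto
qed

lemma smn_inv: assumes "open U" "\<And>t x. (t,x) \<in> U \<Longrightarrow> F t x \<noteq> 0" "\<And>n. smn U n F"
  shows "smn U n (\<lambda>t x. 1 / F t x)"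
proof (induction n)
  case 0
  then show ?case unfolding smn_def using inv_base[OF assms(2,3)] by simp
  next
  case (Suc n)
  show ?case unfolding smn_def
  proof (intro allI impI ballI)
    fix ds :: "bool list" and p assume ds: "length ds \<le> Suc n" and p: "p \<in> U"
    show "D (iterp ds (\<lambda>t x. 1 / F t x)) p"
    proof (cases ds rule: rev_cases)
      case Nil
      then show ?thesis using inv_base[OF assms(2,3) p] by simp
    next
      case (snoc ds' b)
      have l: "length ds' \<le> n" using ds snoc by simp
      let ?K = "\<lambda>t x. -1 * (opb b F t x * (1 / F t x * (1 / F t x)))"
      have a: "smn U n (opb b F)" by (rule smn_op[OF assms(3)])
      have c: "smn U n (\<lambda>t x. 1 / F t x * (1 / F t x))" by (rule smn_mult[OF assms(1) Suc.IH Suc.IH])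
      have d: "smn U n (\<lambda>t x. opb b F t x * (1 / F t x * (1 / F t x)))" by (rule smn_mult[OF assms(1) a c])
      have sK: "smn U n ?K" by (rule smn_mult[OF assms(1) smn_const d])
      have e: "eqU U ?K (opb b (\<lambda>t x. 1 / F t x))"
        unfolding eqU_def
      proof (intro allI impI)
        fix t x assume tx: "(t,x) \<in> U"
        show "?K t x = opb b (\<lambda>t x. 1 / F t x) t x"
          by (rule sym, rule op_inv[OF smn_D[OF assms(3) tx] assms(2)[OF tx]])
      qed
      have "smn U n (opb b (\<lambda>t x. 1 / F t x))" by (rule smn_eqU[OF assms(1) e sK])
      then show ?thesis using l p snoc by (simp add: iterp_snoc smn_def)
    qed
  qed
qed

lemma smooth_smn: "smooth_on U F \<longleftrightarrow> (\<forall>n. smn U n F)"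
proof
  assume "smooth_on U F" then show "\<forall>n. smn U n F" unfolding smooth_on_def smn_def D_def by blast
next
  assume H: "\<forall>n. smn U n F"
  show "smooth_on U F" unfolding smooth_on_def
  proof (intro allI ballI)
    fix ds :: "bool list" and p assume "p \<in> U"
    then show "(\<lambda>q. iterp ds F (fst q) (snd q)) differentiable at p"
      using H unfolding smn_def D_def by (meson order_refl)
  qed
qed


lemma smn_pt: "smn U (Suc n) F \<Longrightarrow> smn U n (pt F)"
  using smn_op[of U n F True] by (simp add: opb_def)

lemma smn_px: "smn U (Suc n) F \<Longrightarrow> smn U n (px F)"
  using smn_op[of U n F False] by (simp add: opb_def)

lemma smn_matd: assumes "open U" "\<And>n. smn U n u" "\<And>n. smn U n F"
  shows "smn U n (matd u F)"
  unfolding matd_def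
  by (rule smn_add[OF assms(1) smn_pt[OF assms(3)] smn_mult[OF assms(1) assms(2) smn_px[OF assms(3)]]])

lemma final:
  fixes h u w W :: "real \<Rightarrow> real \<Rightarrow> real" and g chi t x ht hx ut ux wt wx Wx :: real
  assumes dht: "((\<lambda>s. h s x) has_real_derivative ht) (at t)"
    and dhx: "((\<lambda>y. h t y) has_real_derivative hx) (at x)"
    and dut: "((\<lambda>s. u s x) has_real_derivative ut) (at t)"
    and dux: "((\<lambda>y. u t y) has_real_derivative ux) (at x)"
    and dwt: "((\<lambda>s. w s x) has_real_derivative wt) (at t)"
    and dwx: "((\<lambda>y. w t y) has_real_derivative wx) (at x)"
    and dWx: "((\<lambda>y. W t y) has_real_derivative Wx) (at x)"
    and hpos: "h t x > 0"
    and wdef: "w t x = -1 * (ht * (1 / h t x * (1 / h t x))) + u t x * (-1 * (hx * (1 / h t x * (1 / h t x))))"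
    and Wdef: "W t x = wt + u t x * wx"
    and mass: "pt h t x + px (\<lambda>t x. h t x * u t x) t x = 0"
    and mom: "pt (\<lambda>t x. h t x * u t x) t x
           + px (\<lambda>t x. h t x * (u t x)\<^sup>2 + g * (h t x)\<^sup>2 / 2
                      - chi * W t x) t x = 0"
  shows "pt (\<lambda>t x. h t x * ((u t x)\<^sup>2 / 2 + g * h t x / 2
                      + chi * (w t x)\<^sup>2 / 2)) t x
           + px (\<lambda>t x. (h t x * u t x) * ((u t x)\<^sup>2 / 2 + g * h t x / 2
                      + chi * (w t x)\<^sup>2 / 2)
                    + (g * (h t x)\<^sup>2 / 2 - chi * W t x) * u t x) t x
           = 0"
proof -
  have e1: "pt h t x = ht" by (rule pt_eq) (rule dht)
  have e2: "px (\<lambda>t x. h t x * u t x) t x = hx * u t x + h t x * ux"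
    by (rule px_eq) (auto intro!: derivative_eq_intros dhx dux)
  have e3: "pt (\<lambda>t x. h t x * u t x) t x = ht * u t x + h t x * ut"
    by (rule pt_eq) (auto intro!: derivative_eq_intros dht dut)
  have e4: "px (\<lambda>t x. h t x * (u t x)\<^sup>2 + g * (h t x)\<^sup>2 / 2 - chi * W t x) t x
       = hx * (u t x)^2 + h t x * (2 * u t x * ux) + g * h t x * hx - chi * Wx"
    by (rule px_eq) (auto intro!: derivative_eq_intros dhx dux dWx)
  have e5: "pt (\<lambda>t x. h t x * ((u t x)\<^sup>2 / 2 + g * h t x / 2 + chi * (w t x)\<^sup>2 / 2)) t x
     = ht * ((u t x)\<^sup>2 / 2 + g * h t x / 2 + chi * (w t x)\<^sup>2 / 2)
       + h t x * (u t x * ut + g * ht / 2 + chi * w t x * wt)"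
    by (rule pt_eq) (auto intro!: derivative_eq_intros dht dut dwt)
  have e6: "px (\<lambda>t x. (h t x * u t x) * ((u t x)\<^sup>2 / 2 + g * h t x / 2
                      + chi * (w t x)\<^sup>2 / 2)
                    + (g * (h t x)\<^sup>2 / 2 - chi * W t x) * u t x) t x
     = (hx * u t x + h t x * ux) * ((u t x)\<^sup>2 / 2 + g * h t x / 2 + chi * (w t x)\<^sup>2 / 2)
       + (h t x * u t x) * (u t x * ux + g * hx / 2 + chi * w t x * wx)
       + (g * h t x * hx - chi * Wx) * u t x + (g * (h t x)\<^sup>2 / 2 - chi * W t x) * ux"
    by (rule px_eq) (auto intro!: derivative_eq_intros dhx dux dwx dWx simp: field_simps power2_eq_square)
  have m1: "ht + (hx * u t x + h t x * ux) = 0" using mass e1 e2 by simp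
  have m2: "ht * u t x + h t x * ut + (hx * (u t x)^2 + h t x * (2 * u t x * ux) + g * h t x * hx - chi * Wx) = 0"
    using mom e3 e4 by simp
  have hw: "ux = h t x * w t x"
  proof -
    have "w t x * (h t x * h t x) = - ht - u t x * hx" using wdef hpos by (simp add: field_simps)
    moreover have "- ht - u t x * hx = h t x * ux" using m1 by (simp add: algebra_simps)
    ultimately have "h t x * (h t x * w t x) = h t x * ux" by (simp add: algebra_simps)
    then have "h t x * w t x = ux" using hpos by simp
    then show ?thesis by simp
  qed
  have id: "ht * ((u t x)\<^sup>2 / 2 + g * h t x / 2 + chi * (w t x)\<^sup>2 / 2)
       + h t x * (u t x * ut + g * ht / 2 + chi * w t x * wt)
     + ((hx * u t x + h t x * ux) * ((u t x)\<^sup>2 / 2 + g * h t x / 2 + chi * (w t x)\<^sup>2 / 2)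
       + (h t x * u t x) * (u t x * ux + g * hx / 2 + chi * w t x * wx)
       + (g * h t x * hx - chi * Wx) * u t x + (g * (h t x)\<^sup>2 / 2 - chi * W t x) * ux)
    = ((u t x)\<^sup>2 / 2 + g * h t x / 2 + chi * (w t x)\<^sup>2 / 2 - (u t x)^2 + g * h t x / 2) * (ht + (hx * u t x + h t x * ux))
      + u t x * (ht * u t x + h t x * ut + (hx * (u t x)^2 + h t x * (2 * u t x * ux) + g * h t x * hx - chi * Wx))
      + chi * h t x * w t x * ((wt + u t x * wx) - W t x) + chi * W t x * (h t x * w t x - ux)"
    by (simp add: field_simps power2_eq_square)
  show ?thesis unfolding e5 e6 id using m1 m2 hw Wdef by simp
qed

theorem mainTheorem4:
  fixes g chi :: real and h u :: "real \<Rightarrow> real \<Rightarrow> real" and U :: "(real \<times> real) set"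
  assumes "g > 0" and "chi > 0"
    and "open U"
    and "smooth_on U h" and "smooth_on U u"
    and "\<And>t x. (t, x) \<in> U \<Longrightarrow> h t x > 0"
    and "\<And>t x. (t, x) \<in> U \<Longrightarrow>
           pt h t x + px (\<lambda>t x. h t x * u t x) t x = 0"
    and "\<And>t x. (t, x) \<in> U \<Longrightarrow>
           pt (\<lambda>t x. h t x * u t x) t x
           + px (\<lambda>t x. h t x * (u t x)\<^sup>2 + g * (h t x)\<^sup>2 / 2
                      - chi * matd u (matd u (\<lambda>t x. 1 / h t x)) t x) t x = 0"
  shows "\<And>t x. (t, x) \<in> U \<Longrightarrow>
           pt (\<lambda>t x. h t x * ((u t x)\<^sup>2 / 2 + g * h t x / 2
                      + chi * (matd u (\<lambda>t x. 1 / h t x) t x)\<^sup>2 / 2)) t x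
           + px (\<lambda>t x. (h t x * u t x) * ((u t x)\<^sup>2 / 2 + g * h t x / 2
                      + chi * (matd u (\<lambda>t x. 1 / h t x) t x)\<^sup>2 / 2)
                    + (g * (h t x)\<^sup>2 / 2 - chi * matd u (matd u (\<lambda>t x. 1 / h t x)) t x) * u t x) t x
           = 0"
  proof -
  fix t x assume tx: "(t, x) \<in> U"
  let ?tau = "\<lambda>t x. 1 / h t x"
  have Sh: "\<And>n. smn U n h" using assms(4) smooth_smn by blast
  have Su: "\<And>n. smn U n u" using assms(5) smooth_smn by blast
  have hnz: "\<And>t x. (t, x) \<in> U \<Longrightarrow> h t x \<noteq> 0" using assms(6) by force
  have Stau: "\<And>n. smn U n ?tau" by (rule smn_inv[OF assms(3) hnz Sh])
  have Sw: "\<And>n. smn U n (matd u ?tau)" by (rule smn_matd[OF assms(3) Su Stau])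
  have SW: "\<And>n. smn U n (matd u (matd u ?tau))" by (rule smn_matd[OF assms(3) Su Sw])
  have Dh: "D h (t, x)" by (rule smn_D[OF Sh tx])
  have Du: "D u (t, x)" by (rule smn_D[OF Su tx])
  have Dw: "D (matd u ?tau) (t, x)" by (rule smn_D[OF Sw tx])
  have DW: "D (matd u (matd u ?tau)) (t, x)" by (rule smn_D[OF SW tx])
  have i1: "pt ?tau t x = -1 * (pt h t x * (1 / h t x * (1 / h t x)))"
    using op_inv[OF Dh hnz[OF tx], of True] by (simp add: opb_def)
  have i2: "px ?tau t x = -1 * (px h t x * (1 / h t x * (1 / h t x)))"
    using op_inv[OF Dh hnz[OF tx], of False] by (simp add: opb_def)
  have wdef: "matd u ?tau t x = -1 * (pt h t x * (1 / h t x * (1 / h t x))) + u t x * (-1 * (px h t x * (1 / h t x * (1 / h t x))))"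
    using i1 i2 by (simp add: matd_def)
  have Wdef: "matd u (matd u ?tau) t x = pt (matd u ?tau) t x + u t x * px (matd u ?tau) t x"
    by (simp only: matd_def)
  show "?thesis t x"
    by (rule final[OF D_t[OF Dh] D_x[OF Dh] D_t[OF Du] D_x[OF Du] D_t[OF Dw] D_x[OF Dw] D_x[OF DW]
          assms(6)[OF tx] wdef Wdef assms(7)[OF tx] assms(8)[OF tx]])
qed

end
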